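(* Let $(Z, S(1), S(0), Y(1), Y(0), \mathbf{X})$ be random variables with $Z\in\{0,1\}$, $S(z)\in\{0,1\}$, $Y(z)$ real-valued, $\mathbf{X}$ a covariate vector, observed $S=S(Z)$, $Y=Y(Z)$, and assume Randomization: $Z \perp\!\!\!\perp \{S(1),S(0),Y(1),Y(0),\mathbf{X}\}$. Assume Monotonicity ($S(1)\ge S(0)$ a.s.) and General Principal Ignorability ($Y(z)\perp\!\!\!\perp U\mid \mathbf{X}$ for $z=0,1$). Then for all fixed vectors $\boldsymbol{\beta}_{1,s\bar{s}},\boldsymbol{\beta}_{0,s\bar{s}}$ of the same dimension as $\mathbf{X}$, $$E\{Y(1)-\boldsymbol{\beta}_{1,s\bar{s}}^\top\mathbf{X}\mid U=s\bar{s}\} = E\{w_{1,s\bar{s}}(\mathbf{X})(Y-\boldsymbol{\beta}_{1,s\bar{s}}^\top\mathbf{X})\mid Z=1,S=1\},$$ $$E\{Y(0)-\boldsymbol{\beta}_{0,s\bar{s}}^\top\mathbf{X}\mid U=s\bar{s}\} = E\{w_{0,s\bar{s}}(\mathbf{X})(Y-\boldsymbol{\beta}_{0,s\bar{s}}^\top\mathbf{X})\mid Z=0,S=0\},$$ $$E(\mathbf{X}\mid U=s\bar{s}) = E\{w_{1,s\bar{s}}(\mathbf{X})\mathbf{X}\mid Z=1,S=1\} = E\{w_{0,s\bar{s}}(\mathbf{X})\mathbf{X}\mid Z=0,S=0\},$$ where $w_{1,s\bar{s}}(\mathbf{X}) = \frac{e_{s\bar{s}}(\mathbf{X})}{e_{s\bar{s}}(\mathbf{X})+e_{ss}(\mathbf{X})}\Big/\frac{\pi_{s\bar{s}}}{\pi_{s\bar{s}}+\pi_{ss}}$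 and $w_{0,s\bar{s}}(\mathbf{X}) = \frac{e_{s\bar{s}}(\mathbf{X})}{e_{s\bar{s}}(\mathbf{X})+e_{\bar{s}\bar{s}}(\mathbf{X})}\Big/\frac{\pi_{s\bar{s}}}{\pi_{s\bar{s}}+\pi_{\bar{s}\bar{s}}}$.
   Context: The principal stratum is $U=(S(1),S(0))$, whose values $(1,1),(1,0),(0,1),(0,0)$ are labelled $ss, s\bar{s}, \bar{s}s, \bar{s}\bar{s}$. Principal scores: $e_u(\mathbf{X}) = \Pr(U=u\mid \mathbf{X})$; proportions $\pi_u=\Pr(U=u)$. All expectations are assumed to exist and all conditioning events and denominators to be positive. *)

theory Defs
  imports "HOL-Probability.Probability"
begin

definition observed :: "('a \<Rightarrow> real) \<Rightarrow> ('a \<Rightarrow> 'b) \<Rightarrow> ('a \<Rightarrow> 'b) \<Rightarrow> 'a \<Rightarrow> 'b" where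
  "observed Z A1 A0 = (\<lambda>\<omega>. if Z \<omega> = 1 then A1 \<omega> else A0 \<omega>)"

definition cexp_event :: "'a measure \<Rightarrow> ('a \<Rightarrow> 'b::{banach,second_countable_topology}) \<Rightarrow> 'a set \<Rightarrow> 'b" where
  "cexp_event M f A = (\<integral>\<omega>. indicator A \<omega> *\<^sub>R f \<omega> \<partial>M) /\<^sub>R measure M A"

definition stratum :: "'a measure \<Rightarrow> ('a \<Rightarrow> real) \<Rightarrow> ('a \<Rightarrow> real) \<Rightarrow> real \<Rightarrow> real \<Rightarrow> 'a set" where
  "stratum M S1 S0 s1 s0 = {\<omega> \<in> space M. S1 \<omega> = s1 \<and> S0 \<omega> = s0}"

definition principal_score :: "'a measure \<Rightarrow> ('a \<Rightarrow> 'x::topological_space) \<Rightarrow> ('a \<Rightarrow> real) \<Rightarrow> ('a \<Rightarrow> real) \<Rightarrow> real \<Rightarrow> real \<Rightarrow> 'a \<Rightarrow> real" where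
  "principal_score M X S1 S0 s1 s0 =
     real_cond_exp M (vimage_algebra (space M) X borel) (indicator (stratum M S1 S0 s1 s0))"

definition principal_prop :: "'a measure \<Rightarrow> ('a \<Rightarrow> real) \<Rightarrow> ('a \<Rightarrow> real) \<Rightarrow> real \<Rightarrow> real \<Rightarrow> real" where
  "principal_prop M S1 S0 s1 s0 = measure M (stratum M S1 S0 s1 s0)"

definition cond_indep :: "'a measure \<Rightarrow> ('a \<Rightarrow> 'x::topological_space) \<Rightarrow> ('a \<Rightarrow> 'v::topological_space) \<Rightarrow> ('a \<Rightarrow> 'w::topological_space) \<Rightarrow> bool" where
  "cond_indep M X V W \<longleftrightarrow>
     (\<forall>A\<in>sets borel. \<forall>B\<in>sets borel. AE \<omega> in M.
        real_cond_exp M (vimage_algebra (space M) X borel) (\<lambda>\<omega>. indicator A (V \<omega>) * indicator B (W \<omega>)) \<omega>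
        = real_cond_exp M (vimage_algebra (space M) X borel) (\<lambda>\<omega>. indicator A (V \<omega>)) \<omega>
        * real_cond_exp M (vimage_algebra (space M) X borel) (\<lambda>\<omega>. indicator B (W \<omega>)) \<omega>)"

text \<open>Independence of two random variables with possibly different (Borel) codomains,
  as independence of the generated sigma-algebras (cf. indep_var_eq).\<close>
definition indep_rv :: "'a measure \<Rightarrow> ('a \<Rightarrow> 'b::topological_space) \<Rightarrow> ('a \<Rightarrow> 'c::topological_space) \<Rightarrow> bool" where
  "indep_rv M V W \<longleftrightarrow>
     prob_space.indep_set M
       (sigma_sets (space M) {V -` A \<inter> space M | A. A \<in> sets borel})
       (sigma_sets (space M) {W -` A \<inter> space M | A. A \<in> sets borel})"

end

theory Submission
  imports Defs
begin

lemma ind_ce: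
  fixes M :: "'a measure" and X :: "'a \<Rightarrow> 'x::topological_space" and Y :: "'a \<Rightarrow> real"
    and U :: "'a \<Rightarrow> 'u::topological_space"
  assumes P: "prob_space M" and mX[measurable]: "X \<in> borel_measurable M"
    and mY[measurable]: "Y \<in> borel_measurable M" and mU[measurable]: "U \<in> borel_measurable M"
    and B[measurable]: "B \<in> sets borel" and ci: "cond_indep M X Y U"
  defines "F \<equiv> vimage_algebra (space M) X borel"
    and "G \<equiv> sigma (space M) {X -` C \<inter> Y -` A \<inter> space M | C A. C \<in> sets borel \<and> A \<in> sets (borel::real measure)}"
  shows "AE \<omega> in M. real_cond_exp M G (\<lambda>\<omega>. indicator B (U \<omega>)) \<omega> = real_cond_exp M F (\<lambda>\<omega>. indicator B (U \<omega>)) \<omega>"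
proof -
  interpret prob_space M by fact
  define E where "E = {X -` C \<inter> Y -` A \<inter> space M | C A. C \<in> sets borel \<and> A \<in> sets (borel::real measure)}"
  have EP: "E \<subseteq> Pow (space M)" unfolding E_def by auto
  have EM: "E \<subseteq> sets M" unfolding E_def by auto
  have sG: "sets G = sigma_sets (space M) E" and spG: "space G = space M"
    unfolding G_def E_def[symmetric] using EP by (auto intro: sets_measure_of space_measure_of)
  have sF: "sets F = {X -` C \<inter> space M | C. C \<in> sets borel}"
    unfolding F_def by (rule sets_vimage_algebra2) auto
  have spF: "space F = space M" unfolding F_def by simp
  have subMG: "subalgebra M G" unfolding subalgebra_def spG sG
    using EM by (simp add: sets.sigma_sets_subset)
  have FE: "sets F \<subseteq> E" unfolding sF E_def
  proof safe
    fix C :: "'x set" assume "C \<in> sets borel"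
    then show "\<exists>C' A. X -` C \<inter> space M = X -` C' \<inter> Y -` A \<inter> space M \<and> C' \<in> sets borel \<and> A \<in> sets (borel::real measure)"
      by (intro exI[of _ C] exI[of _ UNIV]) auto
  qed
  have subGF: "subalgebra G F" unfolding subalgebra_def spG spF sG using FE by auto
  have subMF: "subalgebra M F" unfolding subalgebra_def spF using FE EM by auto
  interpret Gs: finite_measure_subalgebra M G by unfold_locales (rule subMG)
  interpret Fs: finite_measure_subalgebra M F by unfold_locales (rule subMF)
  define f where "f = (\<lambda>\<omega>. indicator B (U \<omega>) :: real)"
  define eB where "eB = real_cond_exp M F f"
  have mf[measurable]: "f \<in> borel_measurable M" unfolding f_def by measurable
  have intf: "integrable M f"
    by (rule integrable_const_bound[where B=1]) (auto simp: f_def indicator_def)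
  have inte: "integrable M eB" unfolding eB_def by (rule Fs.real_cond_exp_int(1)[OF intf])
  have meG: "eB \<in> borel_measurable G" unfolding eB_def
    by (rule measurable_from_subalg[OF subGF borel_measurable_cond_exp])
  have meF[measurable]: "eB \<in> borel_measurable F" unfolding eB_def by simp
  have meM[measurable]: "eB \<in> borel_measurable M" unfolding eB_def by simp
  have XF[measurable]: "X \<in> measurable F borel" unfolding F_def by (rule measurable_vimage_algebra1) auto
  have key: "(\<integral>\<omega>. indicator D \<omega> * f \<omega> \<partial>M) = (\<integral>\<omega>. indicator D \<omega> * eB \<omega> \<partial>M)"
    if "D \<in> sigma_sets (space M) E" for D
  proof -
    have "Int_stable E" unfolding E_def Int_stable_def
    proof safe
      fix C C' :: "'x set" and A A' :: "real set" assume "C \<in> sets borel" "A \<in> sets (borel::real measure)" "C' \<in> sets borel" "A' \<in> sets (borel::real measure)"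
      then show "\<exists>Ca Aa. X -` C \<inter> Y -` A \<inter> space M \<inter> (X -` C' \<inter> Y -` A' \<inter> space M) = X -` Ca \<inter> Y -` Aa \<inter> space M \<and> Ca \<in> sets borel \<and> Aa \<in> sets (borel::real measure)"
        by (intro exI[of _ "C \<inter> C'"] exI[of _ "A \<inter> A'"]) auto
    qed
    from this EP that show ?thesis
    proof (induction rule: sigma_sets_induct_disjoint)
      case (basic D)
      then obtain C A where D: "D = X -` C \<inter> Y -` A \<inter> space M" and C[measurable]: "C \<in> sets borel"
        and A[measurable]: "A \<in> sets (borel :: real measure)"
        unfolding E_def by auto
      define h where "h = (\<lambda>\<omega>. indicator A (Y \<omega>) :: real)"
      have mh[measurable]: "h \<in> borel_measurable M" unfolding h_def by measurable
      have ci': "AE \<omega> in M. real_cond_exp M F (\<lambda>\<omega>. h \<omega> * f \<omega>) \<omega> = real_cond_exp M F h \<omega> * eB \<omega>"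
        using ci A B unfolding cond_indep_def F_def eB_def f_def h_def by auto
      have "(\<integral>\<omega>. indicator D \<omega> * f \<omega> \<partial>M) = (\<integral>\<omega>. indicator C (X \<omega>) * (h \<omega> * f \<omega>) \<partial>M)"
        by (rule Bochner_Integration.integral_cong[OF refl]) (auto simp: D h_def indicator_def)
      also have "\<dots> = (\<integral>\<omega>. indicator C (X \<omega>) * real_cond_exp M F (\<lambda>\<omega>. h \<omega> * f \<omega>) \<omega> \<partial>M)"
        by (rule Fs.real_cond_exp_intg(2)[symmetric])
          (auto intro!: integrable_const_bound[where B=1] simp: h_def f_def indicator_def)
      also have "\<dots> = (\<integral>\<omega>. (indicator C (X \<omega>) * eB \<omega>) * real_cond_exp M F h \<omega> \<partial>M)"
        by (rule integral_cong_AE) (use ci' in auto)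
      also have "\<dots> = (\<integral>\<omega>. (indicator C (X \<omega>) * eB \<omega>) * h \<omega> \<partial>M)"
        by (rule Fs.real_cond_exp_intg(2))
          (auto intro!: Bochner_Integration.integrable_bound[OF inte] simp: h_def indicator_def)
      also have "\<dots> = (\<integral>\<omega>. indicator D \<omega> * eB \<omega> \<partial>M)"
        by (rule Bochner_Integration.integral_cong[OF refl]) (auto simp: D h_def indicator_def)
      finally show ?case .
    next
      case empty
      then show ?case by simp
    next
      case (compl D)
      have DM: "D \<in> sets M" using compl(1) EM by (meson sets.sigma_sets_subset subsetD)
      have *: "\<And>g::'a \<Rightarrow> real. integrable M g \<Longrightarrow> (\<integral>\<omega>. indicator (space M - D) \<omega> * g \<omega> \<partial>M) = (\<integral>\<omega>. g \<omega> \<partial>M) - (\<integral>\<omega>. indicator D \<omega> * g \<omega> \<partial>M)"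
      proof -
        fix g :: "'a \<Rightarrow> real" assume g: "integrable M g"
        have "(\<integral>\<omega>. indicator (space M - D) \<omega> * g \<omega> \<partial>M) = (\<integral>\<omega>. g \<omega> - indicator D \<omega> * g \<omega> \<partial>M)"
          by (rule Bochner_Integration.integral_cong[OF refl]) (auto simp: indicator_def)
        also have "\<dots> = (\<integral>\<omega>. g \<omega> \<partial>M) - (\<integral>\<omega>. indicator D \<omega> * g \<omega> \<partial>M)"
          using g DM by (intro Bochner_Integration.integral_diff) (auto intro: integrable_real_mult_indicator simp: mult.commute)
        finally show "(\<integral>\<omega>. indicator (space M - D) \<omega> * g \<omega> \<partial>M) = (\<integral>\<omega>. g \<omega> \<partial>M) - (\<integral>\<omega>. indicator D \<omega> * g \<omega> \<partial>M)" .
      qed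
      have tot: "(\<integral>\<omega>. f \<omega> \<partial>M) = (\<integral>\<omega>. eB \<omega> \<partial>M)"
        unfolding eB_def by (rule Fs.real_cond_exp_int(2)[OF intf, symmetric])
      show ?case using compl(2) tot by (simp add: *[OF intf] *[OF inte])
    next
      case (union A)
      have AM: "\<And>i. A i \<in> sets M" using union(2) EM by (meson range_subsetD sets.sigma_sets_subset subsetD)
      have UM: "(\<Union>i. A i) \<in> sets M" using AM by auto
      have dj: "\<And>i j. i \<noteq> j \<Longrightarrow> A i \<inter> A j = {}" using union(1) unfolding disjoint_family_on_def by auto
      have "\<And>g::'a \<Rightarrow> real. integrable M g \<Longrightarrow> (\<integral>\<omega>. indicator (\<Union>i. A i) \<omega> * g \<omega> \<partial>M) = (\<Sum>i. (\<integral>\<omega>. indicator (A i) \<omega> * g \<omega> \<partial>M))"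
      proof -
        fix g :: "'a \<Rightarrow> real" assume g: "integrable M g"
        have "set_integrable M (\<Union>i. A i) g"
          unfolding set_integrable_def using integrable_mult_indicator[OF UM g] .
        from lebesgue_integral_countable_add[of A M, OF AM dj this]
        show "(\<integral>\<omega>. indicator (\<Union>i. A i) \<omega> * g \<omega> \<partial>M) = (\<Sum>i. (\<integral>\<omega>. indicator (A i) \<omega> * g \<omega> \<partial>M))"
          unfolding set_lebesgue_integral_def by simp
      qed
      then show ?case using union(3) intf inte by simp
    qed
  qed
  show ?thesis unfolding eB_def[symmetric] f_def[symmetric]
  proof (rule Gs.real_cond_exp_charact[OF _ intf inte meG])
    fix D assume "D \<in> sets G"
    then show "(\<integral>\<omega>\<in>D. f \<omega> \<partial>M) = (\<integral>\<omega>\<in>D. eB \<omega> \<partial>M)"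
      using key unfolding sG set_lebesgue_integral_def by simp
  qed
qed

lemma rnd:
  fixes M :: "'a measure" and Z :: "'a \<Rightarrow> real" and T :: "'a \<Rightarrow> 't::topological_space"
  assumes P: "prob_space M" and mZ[measurable]: "Z \<in> borel_measurable M"
    and mT[measurable]: "T \<in> borel_measurable M" and ind: "indep_rv M Z T"
    and mf: "f \<in> borel_measurable (vimage_algebra (space M) T borel)" and intf: "integrable M f"
  shows "(\<integral>\<omega>. f \<omega> * indicator {\<omega>\<in>space M. Z \<omega> = z} \<omega> \<partial>M) = measure M {\<omega>\<in>space M. Z \<omega> = z} * (\<integral>\<omega>. f \<omega> \<partial>M)"
proof -
  interpret prob_space M by fact
  define G where "G = vimage_algebra (space M) T borel"
  define Ez where "Ez = {\<omega>\<in>space M. Z \<omega> = z}"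
  have EzM[measurable]: "Ez \<in> sets M" unfolding Ez_def by measurable
  have sG: "sets G = sigma_sets (space M) {T -` A \<inter> space M | A. A \<in> sets borel}"
    unfolding G_def by (rule sets_vimage_algebra)
  have sG2: "sets G = {T -` A \<inter> space M | A. A \<in> sets borel}"
    unfolding G_def by (rule sets_vimage_algebra2) auto
  have subMG: "subalgebra M G" unfolding subalgebra_def sG2
    by (auto simp: G_def)
  interpret Gs: finite_measure_subalgebra M G by unfold_locales (rule subMG)
  have indset: "indep_set (sigma_sets (space M) {Z -` A \<inter> space M | A. A \<in> sets borel})
       (sigma_sets (space M) {T -` A \<inter> space M | A. A \<in> sets borel})"
    using ind unfolding indep_rv_def by simp
  have EzS: "Ez \<in> sigma_sets (space M) {Z -` A \<inter> space M | A. A \<in> sets borel}"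
    by (rule sigma_sets.Basic) (auto simp: Ez_def intro!: exI[of _ "{z}"])
  have intI: "integrable M (indicator Ez :: 'a \<Rightarrow> real)" using EzM by (intro integrable_const_bound[where B=1]) (auto simp: indicator_def)
  have ae: "AE \<omega> in M. real_cond_exp M G (indicator Ez) \<omega> = measure M Ez"
  proof (rule Gs.real_cond_exp_charact[OF _ intI])
    fix D assume D: "D \<in> sets G"
    have DM: "D \<in> sets M" using D subMG unfolding subalgebra_def by auto
    have "(\<integral>\<omega>\<in>D. indicator Ez \<omega> \<partial>M) = (\<integral>\<omega>. indicator (Ez \<inter> D) \<omega> \<partial>M)"
      unfolding set_lebesgue_integral_def by (rule Bochner_Integration.integral_cong[OF refl]) (auto simp: indicator_def)
    also have "\<dots> = prob (Ez \<inter> D)" using EzM DM by simp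
    also have "\<dots> = prob Ez * prob D"
      by (rule indep_setD[OF indset EzS]) (use D sG in auto)
    also have "\<dots> = (\<integral>\<omega>\<in>D. measure M Ez \<partial>M)"
      using DM by (simp add: set_lebesgue_integral_def mult.commute)
    finally show "(\<integral>\<omega>\<in>D. indicator Ez \<omega> \<partial>M) = (\<integral>\<omega>\<in>D. measure M Ez \<partial>M)" .
  qed auto
  have mfG[measurable]: "f \<in> borel_measurable G" using mf unfolding G_def .
  have "(\<integral>\<omega>. f \<omega> * indicator Ez \<omega> \<partial>M) = (\<integral>\<omega>. f \<omega> * real_cond_exp M G (indicator Ez) \<omega> \<partial>M)"
    by (rule Gs.real_cond_exp_intg(2)[symmetric])
      (auto intro: integrable_real_mult_indicator[OF EzM intf])
  also have "\<dots> = (\<integral>\<omega>. f \<omega> * measure M Ez \<partial>M)"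
    by (rule integral_cong_AE) (use ae measurable_from_subalg[OF subMG mfG] in auto)
  also have "\<dots> = measure M Ez * (\<integral>\<omega>. f \<omega> \<partial>M)" by simp
  finally show ?thesis unfolding Ez_def .
qed

lemma gprops:
  fixes M :: "'a measure" and X :: "'a \<Rightarrow> 'x::topological_space" and Y :: "'a \<Rightarrow> real"
  assumes mX[measurable]: "X \<in> borel_measurable M"
    and mY[measurable]: "Y \<in> borel_measurable M"
  defines "F \<equiv> vimage_algebra (space M) X borel"
    and "G \<equiv> sigma (space M) {X -` C \<inter> Y -` A \<inter> space M | C A. C \<in> sets borel \<and> A \<in> sets (borel::real measure)}"
  shows "subalgebra M G" "subalgebra G F" "Y \<in> borel_measurable G" "X \<in> borel_measurable G"
proof -
  define E where "E = {X -` C \<inter> Y -` A \<inter> space M | C A. C \<in> sets borel \<and> A \<in> sets (borel::real measure)}"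
  have EP: "E \<subseteq> Pow (space M)" unfolding E_def by auto
  have EM: "E \<subseteq> sets M" unfolding E_def by auto
  have sG: "sets G = sigma_sets (space M) E" and spG: "space G = space M"
    unfolding G_def E_def[symmetric] using EP by (auto intro: sets_measure_of space_measure_of)
  have sF: "sets F = {X -` C \<inter> space M | C. C \<in> sets borel}"
    unfolding F_def by (rule sets_vimage_algebra2) auto
  have spF: "space F = space M" unfolding F_def by simp
  show "subalgebra M G" unfolding subalgebra_def spG sG
    using EM by (simp add: sets.sigma_sets_subset)
  have FE: "sets F \<subseteq> E" unfolding sF E_def
  proof safe
    fix C :: "'x set" assume "C \<in> sets borel"
    then show "\<exists>C' A. X -` C \<inter> space M = X -` C' \<inter> Y -` A \<inter> space M \<and> C' \<in> sets borel \<and> A \<in> sets (borel::real measure)"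
      by (intro exI[of _ C] exI[of _ UNIV]) auto
  qed
  show "subalgebra G F" unfolding subalgebra_def spG spF sG using FE by auto
  show "Y \<in> borel_measurable G"
  proof (rule measurableI)
    fix A :: "real set" assume "A \<in> sets borel"
    then have "Y -` A \<inter> space M \<in> E" unfolding E_def
      by (auto intro!: exI[of _ UNIV] exI[of _ A])
    then show "Y -` A \<inter> space G \<in> sets G" unfolding sG spG by auto
  qed auto
  show "X \<in> borel_measurable G"
  proof (rule measurableI)
    fix A :: "'x set" assume "A \<in> sets borel"
    then have "X -` A \<inter> space M \<in> E" unfolding E_def
      by (auto intro!: exI[of _ UNIV] exI[of _ A])
    then show "X -` A \<inter> space G \<in> sets G" unfolding sG spG by auto
  qed auto
qed

lemma ind_intg:
  fixes M :: "'a measure" and X :: "'a \<Rightarrow> 'x::topological_space" and Y :: "'a \<Rightarrow> real"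
    and U :: "'a \<Rightarrow> 'u::topological_space"
  assumes P: "prob_space M" and mX[measurable]: "X \<in> borel_measurable M"
    and mY[measurable]: "Y \<in> borel_measurable M" and mU[measurable]: "U \<in> borel_measurable M"
    and B[measurable]: "B \<in> sets borel" and ci: "cond_indep M X Y U"
    and mk: "k \<in> borel_measurable (sigma (space M) {X -` C \<inter> Y -` A \<inter> space M | C A. C \<in> sets borel \<and> A \<in> sets (borel::real measure)})"
    and ik: "integrable M k"
  shows "(\<integral>\<omega>. k \<omega> * indicator B (U \<omega>) \<partial>M) = (\<integral>\<omega>. k \<omega> * real_cond_exp M (vimage_algebra (space M) X borel) (\<lambda>\<omega>. indicator B (U \<omega>)) \<omega> \<partial>M)"
proof -
  interpret prob_space M by fact
  define G where "G = sigma (space M) {X -` C \<inter> Y -` A \<inter> space M | C A. C \<in> sets borel \<and> A \<in> sets (borel::real measure)}"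
  have subMG: "subalgebra M G" unfolding G_def by (rule gprops) simp_all
  interpret Gs: finite_measure_subalgebra M G by unfold_locales (rule subMG)
  have mkG[measurable]: "k \<in> borel_measurable G" using mk unfolding G_def .
  have mkM[measurable]: "k \<in> borel_measurable M" by (rule measurable_from_subalg[OF subMG mkG])
  have "(\<integral>\<omega>. k \<omega> * indicator B (U \<omega>) \<partial>M) = (\<integral>\<omega>. k \<omega> * real_cond_exp M G (\<lambda>\<omega>. indicator B (U \<omega>)) \<omega> \<partial>M)"
    by (rule Gs.real_cond_exp_intg(2)[symmetric])
      (auto intro!: Bochner_Integration.integrable_bound[OF ik] simp: indicator_def)
  also have "\<dots> = (\<integral>\<omega>. k \<omega> * real_cond_exp M (vimage_algebra (space M) X borel) (\<lambda>\<omega>. indicator B (U \<omega>)) \<omega> \<partial>M)"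
    by (rule integral_cong_AE) (use ind_ce[OF P mX mY mU B ci] in \<open>auto simp: G_def\<close>)
  finally show ?thesis .
qed

lemma main:
  fixes M :: "'a measure" and Z S1 S0 Y Sz Sobs Yobs g gobs :: "'a \<Rightarrow> real"
    and X :: "'a \<Rightarrow> real ^ 'd" and T :: "'a \<Rightarrow> 't::topological_space"
    and v :: "real ^ 'd" and a z sval c1 c0 :: real
  defines "w \<equiv> (\<lambda>\<omega>. (principal_score M X S1 S0 1 0 \<omega> / (principal_score M X S1 S0 1 0 \<omega> + principal_score M X S1 S0 c1 c0 \<omega>))
        / (principal_prop M S1 S0 1 0 / (principal_prop M S1 S0 1 0 + principal_prop M S1 S0 c1 c0)))"
  assumes P: "prob_space M"
    and mZ[measurable]: "Z \<in> borel_measurable M" and mS1[measurable]: "S1 \<in> borel_measurable M"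
    and mS0[measurable]: "S0 \<in> borel_measurable M" and mY[measurable]: "Y \<in> borel_measurable M"
    and mX[measurable]: "X \<in> borel_measurable M" and mT[measurable]: "T \<in> borel_measurable M"
    and mSz[measurable]: "Sz \<in> borel_measurable M"
    and intY: "integrable M Y" and intX: "integrable M X"
    and indep: "indep_rv M Z T"
    and SzT: "Sz \<in> borel_measurable (vimage_algebra (space M) T borel)"
    and YT: "Y \<in> borel_measurable (vimage_algebra (space M) T borel)"
    and XT: "subalgebra (vimage_algebra (space M) T borel) (vimage_algebra (space M) X borel)"
    and ci: "cond_indep M X Y (\<lambda>\<omega>. (S1 \<omega>, S0 \<omega>))"
    and Sz_iff: "AE \<omega> in M. (Sz \<omega> = sval) \<longleftrightarrow> (S1 \<omega>, S0 \<omega>) \<in> {(1,0),(c1,c0)}"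
    and c_ne: "(c1, c0) \<noteq> (1, 0)"
    and obs: "\<forall>\<omega>\<in>space M. Z \<omega> = z \<longrightarrow> Sobs \<omega> = Sz \<omega> \<and> Yobs \<omega> = Y \<omega>"
    and gdef: "g = (\<lambda>\<omega>. a * Y \<omega> + v \<bullet> X \<omega>)" and gobsdef: "gobs = (\<lambda>\<omega>. a * Yobs \<omega> + v \<bullet> X \<omega>)"
    and pos1: "principal_prop M S1 S0 1 0 > 0"
    and pos2: "measure M {\<omega>\<in>space M. Z \<omega> = z \<and> Sobs \<omega> = sval} > 0"
    and pos3: "AE \<omega> in M. principal_score M X S1 S0 1 0 \<omega> + principal_score M X S1 S0 c1 c0 \<omega> > 0"
  shows "cexp_event M g (stratum M S1 S0 1 0)
       = cexp_event M (\<lambda>\<omega>. w \<omega> * gobs \<omega>) {\<omega>\<in>space M. Z \<omega> = z \<and> Sobs \<omega> = sval}"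
proof -
  interpret prob_space M by fact
  define U where "U = (\<lambda>\<omega>. (S1 \<omega>, S0 \<omega>))"
  have mU[measurable]: "U \<in> borel_measurable M" unfolding U_def by measurable
  define F where "F = vimage_algebra (space M) X borel"
  define G where "G = sigma (space M) {X -` C \<inter> Y -` A \<inter> space M | C A. C \<in> sets borel \<and> A \<in> sets (borel::real measure)}"
  define GT where "GT = vimage_algebra (space M) T borel"
  have subMG: "subalgebra M G" and subGF: "subalgebra G F" and YG[measurable]: "Y \<in> borel_measurable G"
    and XG[measurable]: "X \<in> borel_measurable G"
    unfolding G_def F_def by (rule gprops; simp)+
  have subMF: "subalgebra M F" unfolding F_def subalgebra_def by (auto simp: sets_vimage_algebra2)
  interpret Fs: finite_measure_subalgebra M F by unfold_locales (rule subMF)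
  have XGT[measurable]: "X \<in> borel_measurable GT"
    by (rule measurable_from_subalg[OF XT[folded GT_def]]) (rule measurable_vimage_algebra1; simp)
  have YGT[measurable]: "Y \<in> borel_measurable GT" using YT unfolding GT_def .
  have SzGT[measurable]: "Sz \<in> borel_measurable GT" using SzT unfolding GT_def .
  define A10 where "A10 = stratum M S1 S0 1 0"
  define Ac where "Ac = stratum M S1 S0 c1 c0"
  have A10M[measurable]: "A10 \<in> sets M" unfolding A10_def stratum_def by measurable
  have AcM[measurable]: "Ac \<in> sets M" unfolding Ac_def stratum_def by measurable
  define p10 where "p10 = measure M A10"
  define pc where "pc = measure M Ac"
  define e10 where "e10 = real_cond_exp M F (indicator A10)"
  define ec where "ec = real_cond_exp M F (indicator Ac)"
  define K where "K = (p10 + pc) / p10"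
  have p10pos: "p10 > 0" using pos1 unfolding p10_def A10_def principal_prop_def .
  have pcnn: "pc \<ge> 0" unfolding pc_def by simp
  have Kpos: "K > 0" unfolding K_def using p10pos pcnn by simp
  have wdef: "w = (\<lambda>\<omega>. e10 \<omega> / (e10 \<omega> + ec \<omega>) * K)"
    unfolding w_def e10_def ec_def K_def principal_score_def principal_prop_def p10_def pc_def A10_def Ac_def F_def
    by (simp add: fun_eq_iff)
  have e10F[measurable]: "e10 \<in> borel_measurable F" and ecF[measurable]: "ec \<in> borel_measurable F"
    unfolding e10_def ec_def by simp_all
  have wF[measurable]: "w \<in> borel_measurable F" unfolding wdef by measurable
  have wG[measurable]: "w \<in> borel_measurable G" by (rule measurable_from_subalg[OF subGF wF])
  have wGT[measurable]: "w \<in> borel_measurable GT" by (rule measurable_from_subalg[OF XT[folded GT_def F_def] wF])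
  have wM[measurable]: "w \<in> borel_measurable M" by (rule measurable_from_subalg[OF subMF wF])
  have e10M[measurable]: "e10 \<in> borel_measurable M" and ecM[measurable]: "ec \<in> borel_measurable M"
    unfolding e10_def ec_def by simp_all
  have i10: "integrable M (indicator A10 :: 'a \<Rightarrow> real)" and ic: "integrable M (indicator Ac :: 'a \<Rightarrow> real)"
    by (auto intro!: integrable_const_bound[where B=1] simp: indicator_def)
  have e10nn: "AE \<omega> in M. e10 \<omega> \<ge> 0" unfolding e10_def by (rule Fs.real_cond_exp_pos) auto
  have ecnn: "AE \<omega> in M. ec \<omega> \<ge> 0" unfolding ec_def by (rule Fs.real_cond_exp_pos) auto
  have e10le: "AE \<omega> in M. e10 \<omega> \<le> 1" unfolding e10_def by (rule Fs.real_cond_exp_le_c[OF i10]) (auto simp: indicator_def)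
  have wb: "AE \<omega> in M. \<bar>w \<omega>\<bar> \<le> K"
    using e10nn ecnn pos3[folded F_def principal_score_def] 
  proof eventually_elim
    case (elim \<omega>)
    have "e10 \<omega> + ec \<omega> > 0" using elim(3) unfolding e10_def ec_def A10_def Ac_def F_def principal_score_def by simp
    then have h0: "0 \<le> e10 \<omega> / (e10 \<omega> + ec \<omega>)" and h1: "e10 \<omega> / (e10 \<omega> + ec \<omega>) \<le> 1"
      using elim by (auto simp: field_simps)
    have "\<bar>e10 \<omega> / (e10 \<omega> + ec \<omega>) * K\<bar> = e10 \<omega> / (e10 \<omega> + ec \<omega>) * K"
      by (rule abs_of_nonneg[OF mult_nonneg_nonneg[OF h0 less_imp_le[OF Kpos]]])
    also have "\<dots> \<le> 1 * K" by (rule mult_right_mono[OF h1 less_imp_le[OF Kpos]])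
    finally show ?case unfolding wdef by simp
  qed

  have gM[measurable]: "g \<in> borel_measurable M" unfolding gdef by measurable
  have gG[measurable]: "g \<in> borel_measurable G" unfolding gdef by measurable
  have gGT[measurable]: "g \<in> borel_measurable GT" unfolding gdef by measurable
  have ig: "integrable M g" unfolding gdef using intY intX by auto
  have iwg: "integrable M (\<lambda>\<omega>. w \<omega> * g \<omega>)"
  proof (rule Bochner_Integration.integrable_bound[of M "\<lambda>\<omega>. K * g \<omega>"])
    show "integrable M (\<lambda>\<omega>. K * g \<omega>)" using ig by simp
    show "AE \<omega> in M. norm (w \<omega> * g \<omega>) \<le> norm (K * g \<omega>)"
      using wb by eventually_elim (use Kpos in \<open>auto simp: abs_mult intro!: mult_right_mono\<close>)
  qed simp
  define C where "C = {(1::real, 0::real), (c1, c0)}"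
  have CB[measurable]: "C \<in> sets borel" unfolding C_def by simp
  have Ssp[measurable]: "{(1::real, 0::real)} \<in> sets borel" by simp
  have core1: "(\<integral>\<omega>. indicator {sval} (Sz \<omega>) * w \<omega> * g \<omega> \<partial>M) = (\<integral>\<omega>. (w \<omega> * g \<omega>) * indicator C (U \<omega>) \<partial>M)"
    by (rule integral_cong_AE) (use Sz_iff in \<open>auto simp: C_def U_def indicator_def\<close>)
  have core2: "(\<integral>\<omega>. (w \<omega> * g \<omega>) * indicator C (U \<omega>) \<partial>M) = (\<integral>\<omega>. (w \<omega> * g \<omega>) * real_cond_exp M F (\<lambda>\<omega>. indicator C (U \<omega>)) \<omega> \<partial>M)"
    unfolding F_def by (rule ind_intg[OF P mX mY mU CB ci[folded U_def]]) (use iwg in \<open>simp_all add: G_def[symmetric]\<close>)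
  have rce1: "AE \<omega> in M. real_cond_exp M F (\<lambda>\<omega>. indicator C (U \<omega>)) \<omega> = real_cond_exp M F (\<lambda>\<omega>. indicator A10 \<omega> + indicator Ac \<omega>) \<omega>"
    by (rule Fs.real_cond_exp_cong) (use c_ne in \<open>auto simp: C_def U_def A10_def Ac_def stratum_def indicator_def\<close>)
  have rce2: "AE \<omega> in M. real_cond_exp M F (\<lambda>\<omega>. indicator A10 \<omega> + indicator Ac \<omega>) \<omega> = e10 \<omega> + ec \<omega>"
    unfolding e10_def ec_def by (rule Fs.real_cond_exp_add[OF i10 ic])
  have core3: "(\<integral>\<omega>. (w \<omega> * g \<omega>) * real_cond_exp M F (\<lambda>\<omega>. indicator C (U \<omega>)) \<omega> \<partial>M) = (\<integral>\<omega>. K * (g \<omega> * e10 \<omega>) \<partial>M)"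
  proof (rule integral_cong_AE)
    show "AE \<omega> in M. w \<omega> * g \<omega> * real_cond_exp M F (\<lambda>\<omega>. indicator C (U \<omega>)) \<omega> = K * (g \<omega> * e10 \<omega>)"
      using rce1 rce2 pos3
    proof eventually_elim
      case (elim \<omega>)
      have "e10 \<omega> + ec \<omega> > 0" using elim(3) unfolding e10_def ec_def A10_def Ac_def F_def principal_score_def by simp
      then show ?case using elim(1,2) unfolding wdef by (simp add: field_simps)
    qed
  qed simp_all
  have core4: "(\<integral>\<omega>. g \<omega> * e10 \<omega> \<partial>M) = (\<integral>\<omega>. g \<omega> * real_cond_exp M F (\<lambda>\<omega>. indicator {(1::real,0::real)} (U \<omega>)) \<omega> \<partial>M)"
  proof (rule integral_cong_AE)
    have "AE \<omega> in M. e10 \<omega> = real_cond_exp M F (\<lambda>\<omega>. indicator {(1::real,0::real)} (U \<omega>)) \<omega>"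
      unfolding e10_def
      by (rule Fs.real_cond_exp_cong) (auto simp: U_def A10_def stratum_def indicator_def)
    then show "AE \<omega> in M. g \<omega> * e10 \<omega> = g \<omega> * real_cond_exp M F (\<lambda>\<omega>. indicator {(1::real,0::real)} (U \<omega>)) \<omega>"
      by eventually_elim simp
  qed simp_all
  have core5: "(\<integral>\<omega>. g \<omega> * indicator {(1::real,0::real)} (U \<omega>) \<partial>M) = (\<integral>\<omega>. g \<omega> * real_cond_exp M F (\<lambda>\<omega>. indicator {(1::real,0::real)} (U \<omega>)) \<omega> \<partial>M)"
    unfolding F_def by (rule ind_intg[OF P mX mY mU Ssp ci[folded U_def]]) (use ig in \<open>simp_all add: G_def[symmetric]\<close>)
  have core6: "(\<integral>\<omega>. g \<omega> * indicator {(1::real,0::real)} (U \<omega>) \<partial>M) = (\<integral>\<omega>. indicator A10 \<omega> * g \<omega> \<partial>M)"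
    by (rule Bochner_Integration.integral_cong[OF refl]) (auto simp: U_def A10_def stratum_def indicator_def)
  define I where "I = (\<integral>\<omega>. indicator A10 \<omega> * g \<omega> \<partial>M)"
  have core: "(\<integral>\<omega>. indicator {sval} (Sz \<omega>) * w \<omega> * g \<omega> \<partial>M) = K * I"
    unfolding core1 core2 core3 I_def core6[symmetric] core5 core4[symmetric] by simp
  define Ev where "Ev = {\<omega>\<in>space M. Z \<omega> = z \<and> Sobs \<omega> = sval}"
  define Zs where "Zs = {\<omega>\<in>space M. Z \<omega> = z}"
  define pz where "pz = measure M Zs"
  have hnum: "(\<integral>\<omega>. indicator Ev \<omega> *\<^sub>R (w \<omega> * gobs \<omega>) \<partial>M) = pz * (K * I)"
  proof -
    have "(\<integral>\<omega>. indicator Ev \<omega> *\<^sub>R (w \<omega> * gobs \<omega>) \<partial>M) = (\<integral>\<omega>. (indicator {sval} (Sz \<omega>) * w \<omega> * g \<omega>) * indicator Zs \<omega> \<partial>M)"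
      by (rule Bochner_Integration.integral_cong[OF refl]) (use obs in \<open>auto simp: Ev_def Zs_def gdef gobsdef indicator_def\<close>)
    also have "\<dots> = pz * (\<integral>\<omega>. indicator {sval} (Sz \<omega>) * w \<omega> * g \<omega> \<partial>M)"
      unfolding Zs_def pz_def
    proof (rule rnd[OF P mZ mT indep])
      show "(\<lambda>\<omega>. indicator {sval} (Sz \<omega>) * w \<omega> * g \<omega>) \<in> borel_measurable (vimage_algebra (space M) T borel)"
        unfolding GT_def[symmetric] by measurable
      show "integrable M (\<lambda>\<omega>. indicator {sval} (Sz \<omega>) * w \<omega> * g \<omega>)"
        by (rule Bochner_Integration.integrable_bound[OF iwg]) (auto simp: indicator_def)
    qed
    finally show ?thesis using core by simp
  qed
  have hden: "measure M Ev = pz * (p10 + pc)"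
  proof -
    have "measure M Ev = (\<integral>\<omega>. indicator Ev \<omega> \<partial>M)"
    proof -
      have "Ev \<inter> space M = Ev" by (auto simp: Ev_def)
      then show ?thesis by simp
    qed
    also have "\<dots> = (\<integral>\<omega>. indicator {sval} (Sz \<omega>) * indicator Zs \<omega> \<partial>M)"
      by (rule Bochner_Integration.integral_cong[OF refl]) (use obs in \<open>auto simp: Ev_def Zs_def indicator_def\<close>)
    also have "\<dots> = pz * (\<integral>\<omega>. indicator {sval} (Sz \<omega>) \<partial>M)"
      unfolding Zs_def pz_def
    proof (rule rnd[OF P mZ mT indep])
      show "(\<lambda>\<omega>. indicator {sval} (Sz \<omega>) :: real) \<in> borel_measurable (vimage_algebra (space M) T borel)"
        unfolding GT_def[symmetric] by measurable
      show "integrable M (\<lambda>\<omega>. indicator {sval} (Sz \<omega>) :: real)"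
        by (rule integrable_const_bound[where B=1]) (auto simp: indicator_def)
    qed
    also have "(\<integral>\<omega>. indicator {sval} (Sz \<omega>) \<partial>M) = (\<integral>\<omega>. indicator A10 \<omega> + indicator Ac \<omega> \<partial>M)"
      by (rule integral_cong_AE) (use Sz_iff c_ne in \<open>auto simp: A10_def Ac_def stratum_def indicator_def\<close>)
    also have "\<dots> = p10 + pc" using i10 ic by (simp add: p10_def pc_def)
    finally show ?thesis .
  qed
  have EvM: "measure M Ev > 0" using pos2 unfolding Ev_def .
  then have pznz: "pz \<noteq> 0" using hden by auto
  have ppos: "p10 + pc > 0" using p10pos pcnn by simp
  have lhs: "cexp_event M g (stratum M S1 S0 1 0) = I / p10"
    unfolding cexp_event_def A10_def[symmetric] I_def p10_def by (simp add: divide_inverse mult.commute)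
  have rhs: "cexp_event M (\<lambda>\<omega>. w \<omega> * gobs \<omega>) {\<omega>\<in>space M. Z \<omega> = z \<and> Sobs \<omega> = sval} = pz * (K * I) / (pz * (p10 + pc))"
    unfolding cexp_event_def Ev_def[symmetric] hnum hden by (simp add: divide_inverse mult.commute)
  have "pz * (K * I) / (pz * (p10 + pc)) = (K * I) / (p10 + pc)" using pznz by simp
  also have "\<dots> = I / p10" unfolding K_def using ppos p10pos by (simp add: divide_simps)
  finally show ?thesis unfolding lhs rhs by simp
qed

lemma wbound:
  fixes M :: "'a measure" and S1 S0 :: "'a \<Rightarrow> real" and X :: "'a \<Rightarrow> 'x::topological_space"
    and c1 c0 :: real and f :: "'a \<Rightarrow> 'b::{banach,second_countable_topology}"
  defines "w \<equiv> (\<lambda>\<omega>. (principal_score M X S1 S0 1 0 \<omega> / (principal_score M X S1 S0 1 0 \<omega> + principal_score M X S1 S0 c1 c0 \<omega>))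
        / (principal_prop M S1 S0 1 0 / (principal_prop M S1 S0 1 0 + principal_prop M S1 S0 c1 c0)))"
  assumes P: "prob_space M"
    and mS1[measurable]: "S1 \<in> borel_measurable M"
    and mS0[measurable]: "S0 \<in> borel_measurable M" and mX[measurable]: "X \<in> borel_measurable M"
    and pos1: "principal_prop M S1 S0 1 0 > 0"
    and pos3: "AE \<omega> in M. principal_score M X S1 S0 1 0 \<omega> + principal_score M X S1 S0 c1 c0 \<omega> > 0"
    and intf: "integrable M f"
  shows "integrable M (\<lambda>\<omega>. w \<omega> *\<^sub>R f \<omega>)"
proof -
  interpret prob_space M by fact
  define F where "F = vimage_algebra (space M) X borel"
  have subMF: "subalgebra M F" unfolding F_def subalgebra_def by (auto simp: sets_vimage_algebra2)
  interpret Fs: finite_measure_subalgebra M F by unfold_locales (rule subMF)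
  define A10 where "A10 = stratum M S1 S0 1 0"
  define Ac where "Ac = stratum M S1 S0 c1 c0"
  have A10M[measurable]: "A10 \<in> sets M" unfolding A10_def stratum_def by measurable
  have AcM[measurable]: "Ac \<in> sets M" unfolding Ac_def stratum_def by measurable
  define p10 where "p10 = measure M A10"
  define pc where "pc = measure M Ac"
  define e10 where "e10 = real_cond_exp M F (indicator A10)"
  define ec where "ec = real_cond_exp M F (indicator Ac)"
  define K where "K = (p10 + pc) / p10"
  have p10pos: "p10 > 0" using pos1 unfolding p10_def A10_def principal_prop_def .
  have pcnn: "pc \<ge> 0" unfolding pc_def by simp
  have Kpos: "K > 0" unfolding K_def using p10pos pcnn by simp
  have wdef: "w = (\<lambda>\<omega>. e10 \<omega> / (e10 \<omega> + ec \<omega>) * K)"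
    unfolding w_def e10_def ec_def K_def principal_score_def principal_prop_def p10_def pc_def A10_def Ac_def F_def
    by (simp add: fun_eq_iff)
  have e10M[measurable]: "e10 \<in> borel_measurable M" and ecM[measurable]: "ec \<in> borel_measurable M"
    unfolding e10_def ec_def by simp_all
  have wM[measurable]: "w \<in> borel_measurable M" unfolding wdef by measurable
  have e10nn: "AE \<omega> in M. e10 \<omega> \<ge> 0" unfolding e10_def by (rule Fs.real_cond_exp_pos) auto
  have ecnn: "AE \<omega> in M. ec \<omega> \<ge> 0" unfolding ec_def by (rule Fs.real_cond_exp_pos) auto
  have wb: "AE \<omega> in M. \<bar>w \<omega>\<bar> \<le> K"
    using e10nn ecnn pos3
  proof eventually_elim
    case (elim \<omega>)
    have "e10 \<omega> + ec \<omega> > 0" using elim(3) unfolding e10_def ec_def A10_def Ac_def F_def principal_score_def by simp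
    then have h0: "0 \<le> e10 \<omega> / (e10 \<omega> + ec \<omega>)" and h1: "e10 \<omega> / (e10 \<omega> + ec \<omega>) \<le> 1"
      using elim by (auto simp: field_simps)
    have "\<bar>e10 \<omega> / (e10 \<omega> + ec \<omega>) * K\<bar> = e10 \<omega> / (e10 \<omega> + ec \<omega>) * K"
      by (rule abs_of_nonneg[OF mult_nonneg_nonneg[OF h0 less_imp_le[OF Kpos]]])
    also have "\<dots> \<le> 1 * K" by (rule mult_right_mono[OF h1 less_imp_le[OF Kpos]])
    finally show ?case unfolding wdef by simp
  qed
  have mf[measurable]: "f \<in> borel_measurable M" using intf by auto
  show ?thesis
  proof (rule Bochner_Integration.integrable_bound[of M "\<lambda>\<omega>. K *\<^sub>R f \<omega>"])
    show "integrable M (\<lambda>\<omega>. K *\<^sub>R f \<omega>)" using intf by simp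
    show "AE \<omega> in M. norm (w \<omega> *\<^sub>R f \<omega>) \<le> norm (K *\<^sub>R f \<omega>)"
      using wb by eventually_elim (use Kpos in \<open>auto intro!: mult_right_mono\<close>)
  qed simp
qed

lemma vec_cexp:
  fixes f :: "'a \<Rightarrow> real ^ 'd"
  assumes "integrable M f" "A \<in> sets M"
  shows "cexp_event M f A \<bullet> b = cexp_event M (\<lambda>\<omega>. b \<bullet> f \<omega>) A"
proof -
  have i: "integrable M (\<lambda>\<omega>. indicator A \<omega> *\<^sub>R f \<omega>)" by (rule integrable_mult_indicator[OF assms(2,1)])
  have "(\<integral>\<omega>. indicator A \<omega> *\<^sub>R f \<omega> \<partial>M) \<bullet> b = (\<integral>\<omega>. (indicator A \<omega> *\<^sub>R f \<omega>) \<bullet> b \<partial>M)"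
    by (rule integral_inner_left[symmetric]) (use i in simp)
  also have "\<dots> = (\<integral>\<omega>. indicator A \<omega> *\<^sub>R (b \<bullet> f \<omega>) \<partial>M)"
    by (rule Bochner_Integration.integral_cong[OF refl]) (simp add: inner_commute)
  finally show ?thesis unfolding cexp_event_def by simp
qed

theorem corollary3:
  fixes M :: "'a measure"
    and Z S1 S0 Y1 Y0 :: "'a \<Rightarrow> real"
    and X :: "'a \<Rightarrow> real ^ 'd"
    and \<beta>1 \<beta>0 :: "real ^ 'd"
  defines "S \<equiv> observed Z S1 S0"
      and "Y \<equiv> observed Z Y1 Y0"
      and "U \<equiv> (\<lambda>\<omega>. (S1 \<omega>, S0 \<omega>))"
      and "e \<equiv> principal_score M X S1 S0"
      and "\<pi> \<equiv> principal_prop M S1 S0"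
  defines "w1 \<equiv> (\<lambda>\<omega>. (e 1 0 \<omega> / (e 1 0 \<omega> + e 1 1 \<omega>)) / (\<pi> 1 0 / (\<pi> 1 0 + \<pi> 1 1)))"
      and "w0 \<equiv> (\<lambda>\<omega>. (e 1 0 \<omega> / (e 1 0 \<omega> + e 0 0 \<omega>)) / (\<pi> 1 0 / (\<pi> 1 0 + \<pi> 0 0)))"
  assumes prob: "prob_space M"
    and meas: "Z \<in> borel_measurable M" "S1 \<in> borel_measurable M" "S0 \<in> borel_measurable M"
              "Y1 \<in> borel_measurable M" "Y0 \<in> borel_measurable M" "X \<in> borel_measurable M"
    and binary: "\<forall>\<omega>\<in>space M. Z \<omega> \<in> {0,1} \<and> S1 \<omega> \<in> {0,1} \<and> S0 \<omega> \<in> {0,1}"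
    and integ: "integrable M Y1" "integrable M Y0" "integrable M X"
    and randomization: "indep_rv M Z (\<lambda>\<omega>. (S1 \<omega>, S0 \<omega>, Y1 \<omega>, Y0 \<omega>, X \<omega>))"
    and monotonicity: "AE \<omega> in M. S1 \<omega> \<ge> S0 \<omega>"
    and ignorability: "cond_indep M X Y1 U" "cond_indep M X Y0 U"
    and pos_events: "\<pi> 1 0 > 0"
        "measure M {\<omega>\<in>space M. Z \<omega> = 1 \<and> S \<omega> = 1} > 0"
        "measure M {\<omega>\<in>space M. Z \<omega> = 0 \<and> S \<omega> = 0} > 0"
    and pos_denoms: "\<pi> 1 0 + \<pi> 1 1 > 0" "\<pi> 1 0 + \<pi> 0 0 > 0"
        "AE \<omega> in M. e 1 0 \<omega> + e 1 1 \<omega> > 0"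
        "AE \<omega> in M. e 1 0 \<omega> + e 0 0 \<omega> > 0"
  shows "(cexp_event M (\<lambda>\<omega>. Y1 \<omega> - \<beta>1 \<bullet> X \<omega>) (stratum M S1 S0 1 0)
           = cexp_event M (\<lambda>\<omega>. w1 \<omega> * (Y \<omega> - \<beta>1 \<bullet> X \<omega>)) {\<omega>\<in>space M. Z \<omega> = 1 \<and> S \<omega> = 1}) \<and>
         (cexp_event M (\<lambda>\<omega>. Y0 \<omega> - \<beta>0 \<bullet> X \<omega>) (stratum M S1 S0 1 0)
           = cexp_event M (\<lambda>\<omega>. w0 \<omega> * (Y \<omega> - \<beta>0 \<bullet> X \<omega>)) {\<omega>\<in>space M. Z \<omega> = 0 \<and> S \<omega> = 0}) \<and>
         (cexp_event M X (stratum M S1 S0 1 0)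
           = cexp_event M (\<lambda>\<omega>. w1 \<omega> *\<^sub>R X \<omega>) {\<omega>\<in>space M. Z \<omega> = 1 \<and> S \<omega> = 1}) \<and>
         (cexp_event M (\<lambda>\<omega>. w1 \<omega> *\<^sub>R X \<omega>) {\<omega>\<in>space M. Z \<omega> = 1 \<and> S \<omega> = 1}
           = cexp_event M (\<lambda>\<omega>. w0 \<omega> *\<^sub>R X \<omega>) {\<omega>\<in>space M. Z \<omega> = 0 \<and> S \<omega> = 0})"
proof -
  interpret prob_space M by fact
  note [measurable] = meas
  define T where "T = (\<lambda>\<omega>. (S1 \<omega>, S0 \<omega>, Y1 \<omega>, Y0 \<omega>, X \<omega>))"
  have mT[measurable]: "T \<in> borel_measurable M" unfolding T_def by measurable
  define GT where "GT = vimage_algebra (space M) T borel"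
  have TGT[measurable]: "T \<in> borel_measurable GT" unfolding GT_def by (rule measurable_vimage_algebra1) simp
  have S1GT: "S1 \<in> borel_measurable GT"
  proof -
    have "(\<lambda>\<omega>. fst (T \<omega>)) \<in> borel_measurable GT"
      by (rule measurable_compose[OF TGT, of "fst"], rule borel_measurable_continuous_onI) (intro continuous_intros)
    then show ?thesis by (simp add: T_def)
  qed
  have S0GT: "S0 \<in> borel_measurable GT"
  proof -
    have "(\<lambda>\<omega>. fst (snd (T \<omega>))) \<in> borel_measurable GT"
      by (rule measurable_compose[OF TGT, of "(\<lambda>t. fst (snd t))"], rule borel_measurable_continuous_onI) (intro continuous_intros)
    then show ?thesis by (simp add: T_def)
  qed
  have Y1GT: "Y1 \<in> borel_measurable GT"
  proof -
    have "(\<lambda>\<omega>. fst (snd (snd (T \<omega>)))) \<in> borel_measurable GT"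
      by (rule measurable_compose[OF TGT, of "(\<lambda>t. fst (snd (snd t)))"], rule borel_measurable_continuous_onI) (intro continuous_intros)
    then show ?thesis by (simp add: T_def)
  qed
  have Y0GT: "Y0 \<in> borel_measurable GT"
  proof -
    have "(\<lambda>\<omega>. fst (snd (snd (snd (T \<omega>))))) \<in> borel_measurable GT"
      by (rule measurable_compose[OF TGT, of "(\<lambda>t. fst (snd (snd (snd t))))"], rule borel_measurable_continuous_onI) (intro continuous_intros)
    then show ?thesis by (simp add: T_def)
  qed
  have XGT[measurable]: "X \<in> borel_measurable GT"
  proof -
    have "(\<lambda>\<omega>. snd (snd (snd (snd (T \<omega>))))) \<in> borel_measurable GT"
      by (rule measurable_compose[OF TGT, of "(\<lambda>t. snd (snd (snd (snd t))))"], rule borel_measurable_continuous_onI) (intro continuous_intros)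
    then show ?thesis by (simp add: T_def)
  qed
  have spGT: "space GT = space M" unfolding GT_def by simp
  have XT: "subalgebra GT (vimage_algebra (space M) X borel)"
    unfolding subalgebra_def
  proof
    show "space (vimage_algebra (space M) X borel) = space GT" using spGT by simp
    show "sets (vimage_algebra (space M) X borel) \<subseteq> sets GT"
    proof
      fix D assume "D \<in> sets (vimage_algebra (space M) X borel)"
      then obtain C where C: "C \<in> sets borel" "D = X -` C \<inter> space M"
        by (subst (asm) sets_vimage_algebra2) auto
      have "X -` C \<inter> space GT \<in> sets GT" using measurable_sets[OF XGT C(1)] .
      then show "D \<in> sets GT" using C spGT by simp
    qed
  qed
  note GTfacts = S1GT[unfolded GT_def] S0GT[unfolded GT_def] Y1GT[unfolded GT_def] Y0GT[unfolded GT_def] XT[unfolded GT_def]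
  have indepT: "indep_rv M Z T" using randomization unfolding T_def .
  have iff1: "AE \<omega> in M. (S1 \<omega> = 1) \<longleftrightarrow> (S1 \<omega>, S0 \<omega>) \<in> {(1,0),(1,1)}"
    by (rule AE_I2) (use binary in auto)
  have iff0: "AE \<omega> in M. (S0 \<omega> = 0) \<longleftrightarrow> (S1 \<omega>, S0 \<omega>) \<in> {(1,0),(0,0)}"
    by (rule AE_I2) (use binary in auto)
  have obs1: "\<forall>\<omega>\<in>space M. Z \<omega> = 1 \<longrightarrow> S \<omega> = S1 \<omega> \<and> Y \<omega> = Y1 \<omega>"
    by (auto simp: S_def Y_def observed_def)
  have obs0: "\<forall>\<omega>\<in>space M. Z \<omega> = 0 \<longrightarrow> S \<omega> = S0 \<omega> \<and> Y \<omega> = Y0 \<omega>"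
    by (auto simp: S_def Y_def observed_def)
  have ci1: "cond_indep M X Y1 (\<lambda>\<omega>. (S1 \<omega>, S0 \<omega>))" using ignorability(1) unfolding U_def .
  have ci0: "cond_indep M X Y0 (\<lambda>\<omega>. (S1 \<omega>, S0 \<omega>))" using ignorability(2) unfolding U_def .
  have p1: "principal_prop M S1 S0 1 0 > 0" using pos_events(1) unfolding \<pi>_def .
  have p3a: "AE \<omega> in M. principal_score M X S1 S0 1 0 \<omega> + principal_score M X S1 S0 1 1 \<omega> > 0"
    using pos_denoms(3) unfolding e_def .
  have p3b: "AE \<omega> in M. principal_score M X S1 S0 1 0 \<omega> + principal_score M X S1 S0 0 0 \<omega> > 0"
    using pos_denoms(4) unfolding e_def .
  have ne1: "((1::real), (1::real)) \<noteq> (1, 0)" by simp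
  have ne0: "((0::real), (0::real)) \<noteq> (1, 0)" by simp
  have mS: "S1 \<in> borel_measurable M" "S0 \<in> borel_measurable M" by (rule meas)+
  note m1 = main[OF prob meas(1-3) meas(4) meas(6) mT mS(1) integ(1) integ(3) indepT
      GTfacts(1) GTfacts(3) GTfacts(5) ci1 iff1 ne1 obs1 _ _ p1 pos_events(2) p3a]
  note m0 = main[OF prob meas(1-3) meas(5) meas(6) mT mS(2) integ(2) integ(3) indepT
      GTfacts(2) GTfacts(4) GTfacts(5) ci0 iff0 ne0 obs0 _ _ p1 pos_events(3) p3b]
  have w1e: "w1 = (\<lambda>\<omega>. (principal_score M X S1 S0 1 0 \<omega> / (principal_score M X S1 S0 1 0 \<omega> + principal_score M X S1 S0 1 1 \<omega>))
        / (principal_prop M S1 S0 1 0 / (principal_prop M S1 S0 1 0 + principal_prop M S1 S0 1 1)))"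
    unfolding w1_def e_def \<pi>_def ..
  have w0e: "w0 = (\<lambda>\<omega>. (principal_score M X S1 S0 1 0 \<omega> / (principal_score M X S1 S0 1 0 \<omega> + principal_score M X S1 S0 0 0 \<omega>))
        / (principal_prop M S1 S0 1 0 / (principal_prop M S1 S0 1 0 + principal_prop M S1 S0 0 0)))"
    unfolding w0_def e_def \<pi>_def ..
  have G1: "cexp_event M (\<lambda>\<omega>. Y1 \<omega> - \<beta>1 \<bullet> X \<omega>) (stratum M S1 S0 1 0)
           = cexp_event M (\<lambda>\<omega>. w1 \<omega> * (Y \<omega> - \<beta>1 \<bullet> X \<omega>)) {\<omega>\<in>space M. Z \<omega> = 1 \<and> S \<omega> = 1}"
    unfolding w1e by (rule m1[where a=1 and v="-\<beta>1"]) (simp_all add: fun_eq_iff)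
  have G0: "cexp_event M (\<lambda>\<omega>. Y0 \<omega> - \<beta>0 \<bullet> X \<omega>) (stratum M S1 S0 1 0)
           = cexp_event M (\<lambda>\<omega>. w0 \<omega> * (Y \<omega> - \<beta>0 \<bullet> X \<omega>)) {\<omega>\<in>space M. Z \<omega> = 0 \<and> S \<omega> = 0}"
    unfolding w0e by (rule m0[where a=1 and v="-\<beta>0"]) (simp_all add: fun_eq_iff)
  have B1: "cexp_event M (\<lambda>\<omega>. b \<bullet> X \<omega>) (stratum M S1 S0 1 0)
           = cexp_event M (\<lambda>\<omega>. w1 \<omega> * (b \<bullet> X \<omega>)) {\<omega>\<in>space M. Z \<omega> = 1 \<and> S \<omega> = 1}" for b
    unfolding w1e by (rule m1[where a=0 and v=b]) (simp_all add: fun_eq_iff)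
  have B0: "cexp_event M (\<lambda>\<omega>. b \<bullet> X \<omega>) (stratum M S1 S0 1 0)
           = cexp_event M (\<lambda>\<omega>. w0 \<omega> * (b \<bullet> X \<omega>)) {\<omega>\<in>space M. Z \<omega> = 0 \<and> S \<omega> = 0}" for b
    unfolding w0e by (rule m0[where a=0 and v=b]) (simp_all add: fun_eq_iff)
  have iw1: "integrable M (\<lambda>\<omega>. w1 \<omega> *\<^sub>R X \<omega>)"
    unfolding w1e by (rule wbound[OF prob mS meas(6) p1 p3a integ(3)])
  have iw0: "integrable M (\<lambda>\<omega>. w0 \<omega> *\<^sub>R X \<omega>)"
    unfolding w0e by (rule wbound[OF prob mS meas(6) p1 p3b integ(3)])
  have Sm: "S \<in> borel_measurable M" unfolding S_def observed_def by measurable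
  have Am: "stratum M S1 S0 1 0 \<in> sets M" unfolding stratum_def by measurable
  have E1m: "{\<omega>\<in>space M. Z \<omega> = 1 \<and> S \<omega> = 1} \<in> sets M" using Sm by measurable
  have E0m: "{\<omega>\<in>space M. Z \<omega> = 0 \<and> S \<omega> = 0} \<in> sets M" using Sm by measurable
  have V1: "cexp_event M X (stratum M S1 S0 1 0) = cexp_event M (\<lambda>\<omega>. w1 \<omega> *\<^sub>R X \<omega>) {\<omega>\<in>space M. Z \<omega> = 1 \<and> S \<omega> = 1}"
  proof (rule euclidean_eqI)
    fix b :: "real ^ 'd" assume "b \<in> Basis"
    show "cexp_event M X (stratum M S1 S0 1 0) \<bullet> b = cexp_event M (\<lambda>\<omega>. w1 \<omega> *\<^sub>R X \<omega>) {\<omega>\<in>space M. Z \<omega> = 1 \<and> S \<omega> = 1} \<bullet> b"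
      unfolding vec_cexp[OF integ(3) Am] vec_cexp[OF iw1 E1m] B1 by simp
  qed
  have V0: "cexp_event M X (stratum M S1 S0 1 0) = cexp_event M (\<lambda>\<omega>. w0 \<omega> *\<^sub>R X \<omega>) {\<omega>\<in>space M. Z \<omega> = 0 \<and> S \<omega> = 0}"
  proof (rule euclidean_eqI)
    fix b :: "real ^ 'd" assume "b \<in> Basis"
    show "cexp_event M X (stratum M S1 S0 1 0) \<bullet> b = cexp_event M (\<lambda>\<omega>. w0 \<omega> *\<^sub>R X \<omega>) {\<omega>\<in>space M. Z \<omega> = 0 \<and> S \<omega> = 0} \<bullet> b"
      unfolding vec_cexp[OF integ(3) Am] vec_cexp[OF iw0 E0m] B0 by simp
  qed
  show ?thesis using G1 G0 V1 V0 by simp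
qed

end
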